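(* Let $G=(V,E)$ be a comparability graph with $V=\{v_1,\dots,v_n\}$. For distinct $u_1,\dots,u_k\in V$, let $G\setminus u_1\cdots u_k$ be the subgraph of $G$ induced on $V\setminus\{u_1,\dots,u_k\}$. Then $$\varepsilon(G)\ge\sum_{\sigma\in\mathfrak S_n}\prod_{k=0}^{n-1}\frac{1}{\chi\big(G\setminus v_{\sigma(1)}v_{\sigma(2)}\cdots v_{\sigma(k)}\big)},$$ where the $k=0$ factor is $1/\chi(G)$, $\mathfrak S_n$ is the symmetric group on $[n]$, and $\chi$ denotes chromatic number.
   Context: A comparability graph is a simple undirected graph $G=(V,E)$ for which there is a partial order on $V$ under which two distinct vertices are comparable iff they are adjacent. For an undirected simple graph $G=(V,E)$, $\varepsilon(G)$ denotes the maximum, over all acyclic orientations of $E$, of the number of linear extensions of the partial order induced on $V$ (where $u<v$ iff there is a directed path from $u$ to $v$; a linear extension of a poset on an $n$-element set is an order-preserving bijection onto $[n]$). *)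

theory Defs
  imports Complex_Main "HOL-Library.FuncSet" "HOL-Combinatorics.Permutations"
begin

definition simple_graph :: "'a set \<Rightarrow> ('a \<times> 'a) set \<Rightarrow> bool" where
  "simple_graph V E \<longleftrightarrow> finite V \<and> E \<subseteq> V \<times> V \<and> sym E \<and> irrefl E"

definition comparability_graph :: "'a set \<Rightarrow> ('a \<times> 'a) set \<Rightarrow> bool" where
  "comparability_graph V E \<longleftrightarrow> simple_graph V E \<and>
     (\<exists>R. R \<subseteq> V \<times> V \<and> irrefl R \<and> trans R \<and>
          (\<forall>u\<in>V. \<forall>w\<in>V. u \<noteq> w \<longrightarrow> ((u, w) \<in> E \<longleftrightarrow> (u, w) \<in> R \<or> (w, u) \<in> R)))"

definition acyclic_orientation :: "('a \<times> 'a) set \<Rightarrow> ('a \<times> 'a) set \<Rightarrow> bool" where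
  "acyclic_orientation E D \<longleftrightarrow> D \<subseteq> E \<and>
     (\<forall>(u, w)\<in>E. ((u, w) \<in> D \<longleftrightarrow> (w, u) \<notin> D)) \<and> acyclic D"

definition linear_extensions :: "'a set \<Rightarrow> ('a \<times> 'a) set \<Rightarrow> ('a \<Rightarrow> nat) set" where
  "linear_extensions V D = {f \<in> V \<rightarrow>\<^sub>E {1..card V}. bij_betw f V {1..card V} \<and>
     (\<forall>u\<in>V. \<forall>w\<in>V. (u, w) \<in> D\<^sup>+ \<longrightarrow> f u < f w)}"

definition num_linear_extensions :: "'a set \<Rightarrow> ('a \<times> 'a) set \<Rightarrow> nat" where
  "num_linear_extensions V D = card (linear_extensions V D)"

definition eps :: "'a set \<Rightarrow> ('a \<times> 'a) set \<Rightarrow> nat" where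
  "eps V E = Max (num_linear_extensions V ` {D. acyclic_orientation E D})"

definition chromatic_number :: "'a set \<Rightarrow> ('a \<times> 'a) set \<Rightarrow> nat" where
  "chromatic_number V E = (LEAST k. \<exists>c :: 'a \<Rightarrow> nat.
      (\<forall>v\<in>V. c v < k) \<and> (\<forall>(u, w)\<in>E. c u \<noteq> c w))"

definition del_vertices_E :: "'a set \<Rightarrow> ('a \<times> 'a) set \<Rightarrow> 'a set \<Rightarrow> ('a \<times> 'a) set" where
  "del_vertices_E V E S = E \<inter> ((V - S) \<times> (V - S))"

end

theory Submission
  imports Defs "HOL-Combinatorics.Multiset_Permutations"
begin


definition ext :: "'a set \<Rightarrow> ('a \<times> 'a) set \<Rightarrow> ('a \<Rightarrow> nat) set" where
  "ext W R = {f \<in> W \<rightarrow>\<^sub>E {1..card W}. bij_betw f W {1..card W} \<and>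
     (\<forall>u\<in>W. \<forall>w\<in>W. (u, w) \<in> R \<longrightarrow> f u < f w)}"

definition mins :: "'a set \<Rightarrow> ('a \<times> 'a) set \<Rightarrow> 'a set" where
  "mins W R = {m\<in>W. \<forall>u\<in>W. (u, m) \<notin> R}"

lemma inj_card_bij:
  assumes "inj_on f A" "f ` A \<subseteq> B" "card A = card B" "finite B"
  shows "bij_betw f A B"
proof -
  have "card (f ` A) = card B" using assms by (simp add: card_image)
  hence "f ` A = B" using assms by (metis card_subset_eq)
  thus ?thesis using assms by (simp add: bij_betw_def)
qed

lemma finite_ext: "finite W \<Longrightarrow> finite (ext W R)"
  by (rule finite_subset[of _ "W \<rightarrow>\<^sub>E {1..card W}"]) (auto simp: ext_def finite_PiE)

lemma ext_empty: "ext {} R = {\<lambda>_. undefined}"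
  by (auto simp: ext_def bij_betw_def)

lemma ext_slice:
  assumes fin: "finite W" and m: "m \<in> mins W R"
  shows "bij_betw (\<lambda>f x. if x \<in> W - {m} then f x - 1 else undefined)
           {f \<in> ext W R. f m = 1} (ext (W - {m}) R)"
proof -
  have mW: "m \<in> W" using m by (simp add: mins_def)
  define c where "c = card (W - {m})"
  have cW: "card W = Suc c" using fin mW by (simp add: c_def card_Suc_Diff1 del: card_Diff_insert)
  have cinj: "inj_on f W" if "f \<in> ext W R" for f using that by (auto simp: ext_def bij_betw_def)
  have fge: "f x \<ge> 2" if "f \<in> ext W R" "f m = 1" "x \<in> W - {m}" for f x
  proof -
    have "f x \<in> {1..card W}" using that by (auto simp: ext_def)
    moreover have "f x \<noteq> 1" using cinj[OF that(1)] that mW by (metis DiffE inj_onD singletonI)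
    ultimately show ?thesis by auto
  qed
  show ?thesis
  proof (rule bij_betw_byWitness[where f'="\<lambda>g x. if x = m then 1 else if x \<in> W then g x + 1 else undefined"])
    show "\<forall>f\<in>{f \<in> ext W R. f m = 1}. (\<lambda>x. if x = m then 1 else if x \<in> W then
        (if x \<in> W - {m} then f x - 1 else undefined) + 1 else undefined) = f"
    proof (intro ballI ext)
      fix f x assume f: "f \<in> {f \<in> ext W R. f m = 1}"
      show "(if x = m then 1 else if x \<in> W then
        (if x \<in> W - {m} then f x - 1 else undefined) + 1 else undefined) = f x"
        using f fge[of f x] by (auto simp: ext_def PiE_def extensional_def)
    qed
    show "\<forall>g\<in>ext (W - {m}) R. (\<lambda>x. if x \<in> W - {m} then
        (if x = m then 1 else if x \<in> W then g x + 1 else undefined) - 1 else undefined) = g"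
      by (auto simp: ext_def PiE_def extensional_def)
    show "(\<lambda>f x. if x \<in> W - {m} then f x - 1 else undefined) ` {f \<in> ext W R. f m = 1}
        \<subseteq> ext (W - {m}) R"
    proof safe
      fix f assume f: "f \<in> ext W R" "f m = 1"
      let ?g = "\<lambda>x. if x \<in> W - {m} then f x - 1 else undefined"
      have fr: "f x \<in> {1..Suc c}" if "x \<in> W" for x using f that cW by (auto simp: ext_def)
      have g1: "?g \<in> (W - {m}) \<rightarrow>\<^sub>E {1..card (W - {m})}"
      proof (unfold PiE_iff, intro conjI ballI)
        fix x assume x: "x \<in> W - {m}"
        have "2 \<le> f x" "f x \<le> Suc c" using fr[of x] fge[OF f x] x by auto
        thus "?g x \<in> {1..card (W - {m})}" using x by (simp add: c_def[symmetric], arith)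
      qed (simp add: extensional_def)
      have "inj_on ?g (W - {m})"
      proof (rule inj_onI)
        fix x y assume "x \<in> W - {m}" "y \<in> W - {m}" "?g x = ?g y"
        moreover have "f x = f y" using calculation fge[OF f, of x] fge[OF f, of y] by simp
        ultimately show "x = y" using cinj[OF f(1)] by (meson DiffD1 inj_onD)
      qed
      moreover have "?g ` (W - {m}) \<subseteq> {1..card (W - {m})}" using g1 by (blast dest: PiE_mem)
      ultimately have "bij_betw ?g (W - {m}) {1..card (W - {m})}"
        using fin by (intro inj_card_bij) auto
      moreover have "\<forall>u\<in>W - {m}. \<forall>w\<in>W - {m}. (u, w) \<in> R \<longrightarrow> ?g u < ?g w"
      proof (intro ballI impI)
        fix u w assume uw: "u \<in> W - {m}" "w \<in> W - {m}" "(u, w) \<in> R"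
        have "\<forall>u\<in>W. \<forall>w\<in>W. (u, w) \<in> R \<longrightarrow> f u < f w" using f by (simp add: ext_def)
        hence "f u < f w" using uw by blast
        moreover have "2 \<le> f u" using fge[OF f uw(1)] .
        ultimately show "?g u < ?g w" using uw by simp
      qed
      ultimately show "?g \<in> ext (W - {m}) R" using g1 by (simp add: ext_def)
    qed
    show "(\<lambda>g x. if x = m then 1 else if x \<in> W then g x + 1 else undefined) ` ext (W - {m}) R
        \<subseteq> {f \<in> ext W R. f m = 1}"
    proof safe
      fix g assume g: "g \<in> ext (W - {m}) R"
      let ?f = "\<lambda>x. if x = m then 1 else if x \<in> W then g x + 1 else undefined"
      have gr: "g x \<in> {1..c}" if "x \<in> W - {m}" for x
      proof -
        have "g \<in> (W - {m}) \<rightarrow>\<^sub>E {1..card (W - {m})}" using g by (simp add: ext_def)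
        hence "g x \<in> {1..card (W - {m})}" using that by (rule PiE_mem)
        thus ?thesis by (simp add: c_def)
      qed
      have ginj: "inj_on g (W - {m})" using g by (auto simp: ext_def bij_betw_def)
      have f1: "?f \<in> W \<rightarrow>\<^sub>E {1..card W}"
      proof (unfold PiE_iff, intro conjI ballI)
        fix x assume x: "x \<in> W"
        show "?f x \<in> {1..card W}"
        proof (cases "x = m")
          case False thus ?thesis using gr[of x] x cW by simp
        qed (simp add: cW)
      qed (simp add: extensional_def mW)
      have "inj_on ?f W"
      proof (rule inj_onI)
        fix x y assume xy: "x \<in> W" "y \<in> W" "?f x = ?f y"
        show "x = y"
        proof (cases "x = m"; cases "y = m")
          assume "x \<noteq> m" "y \<noteq> m"
          hence "g x = g y" using xy by simp
          thus "x = y" using ginj xy \<open>x \<noteq> m\<close> \<open>y \<noteq> m\<close> by (meson DiffI inj_onD singletonD)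
        next
          assume "x = m" "y \<noteq> m" thus "x = y" using xy gr[of y] by simp
        next
          assume "x \<noteq> m" "y = m" thus "x = y" using xy gr[of x] by simp
        qed simp
      qed
      moreover have "?f ` W \<subseteq> {1..card W}" using f1 by (blast dest: PiE_mem)
      ultimately have "bij_betw ?f W {1..card W}" using fin by (intro inj_card_bij) auto
      moreover have "\<forall>u\<in>W. \<forall>w\<in>W. (u, w) \<in> R \<longrightarrow> ?f u < ?f w"
      proof (intro ballI impI)
        fix u w assume uw: "u \<in> W" "w \<in> W" "(u, w) \<in> R"
        have "w \<noteq> m" using m uw by (auto simp: mins_def)
        then show "?f u < ?f w" using uw g gr[of w] by (auto simp: ext_def)
      qed
      ultimately show "?f \<in> ext W R" using f1 by (simp add: ext_def)
      show "?f m = 1" by simp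
    qed
  qed
qed

lemma ext_rec:
  assumes fin: "finite W" and ne: "W \<noteq> {}"
  shows "card (ext W R) = (\<Sum>m\<in>mins W R. card (ext (W - {m}) R))"
proof -
  have eq: "ext W R = (\<Union>m\<in>mins W R. {f \<in> ext W R. f m = 1})"
  proof safe
    fix f assume f: "f \<in> ext W R"
    have "1 \<in> {1..card W}" using fin ne by (simp add: Suc_leI card_gt_0_iff)
    then obtain m where m: "m \<in> W" "f m = 1" using f unfolding ext_def bij_betw_def by force
    have "m \<in> mins W R"
    proof -
      have "(u, m) \<notin> R" if "u \<in> W" for u
      proof
        assume "(u, m) \<in> R"
        moreover have "\<forall>u\<in>W. \<forall>w\<in>W. (u, w) \<in> R \<longrightarrow> f u < f w" using f by (simp add: ext_def)
        ultimately have "f u < f m" using m(1) that by blast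
        hence "f u < 1" using m(2) by simp
        moreover have "f u \<ge> 1" using f that by (auto simp: ext_def)
        ultimately show False by simp
      qed
      thus ?thesis using m by (simp add: mins_def)
    qed
    thus "f \<in> (\<Union>m\<in>mins W R. {f \<in> ext W R. f m = 1})" using f m by blast
  qed
  have "card (ext W R) = (\<Sum>m\<in>mins W R. card {f \<in> ext W R. f m = 1})"
  proof (subst eq, rule card_UN_disjoint)
    show "finite (mins W R)" using fin by (simp add: mins_def)
    show "\<forall>i\<in>mins W R. finite {f \<in> ext W R. f i = 1}" using finite_ext[OF fin, of R] by simp
    show "\<forall>i\<in>mins W R. \<forall>j\<in>mins W R. i \<noteq> j \<longrightarrow> {f \<in> ext W R. f i = 1} \<inter> {f \<in> ext W R. f j = 1} = {}"
    proof (intro ballI impI)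
      fix i j assume ij: "i \<in> mins W R" "j \<in> mins W R" "i \<noteq> j"
      show "{f \<in> ext W R. f i = 1} \<inter> {f \<in> ext W R. f j = 1} = {}"
      proof (rule ccontr)
        assume "{f \<in> ext W R. f i = 1} \<inter> {f \<in> ext W R. f j = 1} \<noteq> {}"
        then obtain f where f: "f \<in> ext W R" "f i = 1" "f j = 1" by blast
        have "inj_on f W" using f(1) by (simp add: ext_def bij_betw_def)
        moreover have "i \<in> W" "j \<in> W" using ij by (auto simp: mins_def)
        ultimately show False using f ij(3) by (metis inj_onD)
      qed
    qed
  qed
  also have "\<dots> = (\<Sum>m\<in>mins W R. card (ext (W - {m}) R))"
    by (rule sum.cong[OF refl]) (rule bij_betw_same_card[OF ext_slice[OF fin]])
  finally show ?thesis .
qed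



lemma antichain_ineq:
  assumes "finite W" "A \<subseteq> W" "\<forall>a\<in>A. \<forall>b\<in>A. (a, b) \<notin> R" "irrefl R" "trans R"
  shows "(\<Sum>x\<in>A. card (ext (W - {x}) R)) \<le> card (ext W R)"
  using assms
proof (induction "card W" arbitrary: W A rule: less_induct)
  case less
  note fin = less.prems(1) and AW = less.prems(2) and anti = less.prems(3)
  note irr = less.prems(4) and tr = less.prems(5)
  let ?e = "\<lambda>U. card (ext U R)"
  show ?case
  proof (cases "\<exists>x. W = {x}")
    case True
    then obtain x where Wx: "W = {x}" by blast
    have mx: "mins {x} R = {x}" using irr by (auto simp: mins_def irrefl_def)
    have ex: "?e {x} = 1" using ext_rec[of "{x}" R] mx by (simp add: ext_empty)
    show ?thesis
    proof (cases "A = {}")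
      case False
      hence "A = {x}" using AW Wx by blast
      thus ?thesis using Wx ex by (simp add: ext_empty)
    qed simp
  next
    case notsing: False
    show ?thesis
    proof (cases "W = {}")
      case True thus ?thesis using AW by simp
    next
      case ne: False
      define M where "M = mins W R"
      define N where "N = (\<lambda>x. mins (W - {x}) R - M)"
      have finA: "finite A" using AW fin finite_subset by blast
      have finM: "finite M" using fin by (simp add: M_def mins_def)
      have MW: "M \<subseteq> W" by (auto simp: M_def mins_def)
      have ne2: "W - {x} \<noteq> {}" for x using notsing ne by blast
      have fin2: "finite (W - {x})" for x using fin by simp
      have minsx: "mins (W - {x}) R = (M - {x}) \<union> N x" for x
        by (auto simp: M_def N_def mins_def)
      have Nsub: "N x \<subseteq> {n. (x, n) \<in> R} \<inter> (W - {x})" for x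
        by (auto simp: M_def N_def mins_def)
      have Nempty: "N x = {}" if xM: "x \<notin> M" and xW: "x \<in> W" for x
      proof (rule ccontr)
        assume "N x \<noteq> {}"
        then obtain n where n: "n \<in> N x" by blast
        then have xn: "(x, n) \<in> R" "n \<in> W - {x}" using Nsub by auto
        obtain z where z: "z \<in> W" "(z, x) \<in> R" using xM xW unfolding M_def mins_def by blast
        have "(z, n) \<in> R" using z xn tr by (meson transD)
        moreover have "z \<noteq> x" using z irr by (auto simp: irrefl_def)
        ultimately show False using n z by (auto simp: N_def mins_def)
      qed
      have finN: "finite (N x)" for x using fin by (auto simp: N_def mins_def)
      have dM: "(M - {x}) \<inter> N x = {}" for x by (auto simp: N_def)
      have ex: "?e (W - {x}) = (\<Sum>m\<in>M - {x}. ?e (W - {m} - {x})) + (\<Sum>n\<in>N x. ?e (W - {x} - {n}))" for x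
      proof -
        have "?e (W - {x}) = (\<Sum>m\<in>mins (W - {x}) R. ?e (W - {x} - {m}))"
          by (rule ext_rec[OF fin2 ne2])
        also have "\<dots> = (\<Sum>m\<in>M - {x}. ?e (W - {x} - {m})) + (\<Sum>n\<in>N x. ?e (W - {x} - {n}))"
          unfolding minsx by (rule sum.union_disjoint) (use finM finN dM in auto)
        also have "(\<Sum>m\<in>M - {x}. ?e (W - {x} - {m})) = (\<Sum>m\<in>M - {x}. ?e (W - {m} - {x}))"
          proof (rule sum.cong[OF refl])
          fix m have "W - {x} - {m} = W - {m} - {x}" by blast
          thus "?e (W - {x} - {m}) = ?e (W - {m} - {x})" by simp
        qed
        finally show ?thesis .
      qed
      define T where "T = (\<lambda>m. (\<Sum>x\<in>A - {m}. ?e (W - {m} - {x})) +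
                         (if m \<in> A then (\<Sum>n\<in>N m. ?e (W - {m} - {n})) else 0))"
      have "(\<Sum>x\<in>A. ?e (W - {x})) =
          (\<Sum>x\<in>A. \<Sum>m\<in>M - {x}. ?e (W - {m} - {x})) + (\<Sum>x\<in>A. \<Sum>n\<in>N x. ?e (W - {x} - {n}))"
        by (simp add: ex sum.distrib)
      also have "(\<Sum>x\<in>A. \<Sum>m\<in>M - {x}. ?e (W - {m} - {x})) = (\<Sum>m\<in>M. \<Sum>x\<in>A - {m}. ?e (W - {m} - {x}))"
      proof -
        have "(\<Sum>x\<in>A. \<Sum>m\<in>M - {x}. ?e (W - {m} - {x})) =
              (\<Sum>x\<in>A. \<Sum>m\<in>M. if m \<noteq> x then ?e (W - {m} - {x}) else 0)"
        proof (rule sum.cong[OF refl])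
          fix x show "(\<Sum>m\<in>M - {x}. ?e (W - {m} - {x})) = (\<Sum>m\<in>M. if m \<noteq> x then ?e (W - {m} - {x}) else 0)"
            using finM by (simp add: sum.inter_filter[symmetric] set_diff_eq)
        qed
        also have "\<dots> = (\<Sum>m\<in>M. \<Sum>x\<in>A. if m \<noteq> x then ?e (W - {m} - {x}) else 0)"
          by (rule sum.swap)
        also have "\<dots> = (\<Sum>m\<in>M. \<Sum>x\<in>A - {m}. ?e (W - {m} - {x}))"
        proof (rule sum.cong[OF refl])
          fix m show "(\<Sum>x\<in>A. if m \<noteq> x then ?e (W - {m} - {x}) else 0) = (\<Sum>x\<in>A - {m}. ?e (W - {m} - {x}))"
            using finA by (simp add: sum.inter_filter[symmetric] set_diff_eq eq_commute)
        qed
        finally show ?thesis .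
      qed
      also have "(\<Sum>x\<in>A. \<Sum>n\<in>N x. ?e (W - {x} - {n})) =
                 (\<Sum>m\<in>M. if m \<in> A then (\<Sum>n\<in>N m. ?e (W - {m} - {n})) else 0)"
      proof -
        have "(\<Sum>x\<in>A. \<Sum>n\<in>N x. ?e (W - {x} - {n})) = (\<Sum>x\<in>A \<inter> M. \<Sum>n\<in>N x. ?e (W - {x} - {n}))"
          proof (rule sum.mono_neutral_right)
          show "\<forall>i\<in>A - A \<inter> M. (\<Sum>n\<in>N i. ?e (W - {i} - {n})) = 0"
          proof
            fix i assume "i \<in> A - A \<inter> M"
            hence "N i = {}" using Nempty AW by blast
            thus "(\<Sum>n\<in>N i. ?e (W - {i} - {n})) = 0" by simp
          qed
        qed (use finA in auto)
        also have "\<dots> = (\<Sum>m\<in>{m\<in>M. m \<in> A}. \<Sum>n\<in>N m. ?e (W - {m} - {n}))"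
          by (rule sum.cong) auto
        also have "\<dots> = (\<Sum>m\<in>M. if m \<in> A then (\<Sum>n\<in>N m. ?e (W - {m} - {n})) else 0)"
          using finM by (rule sum.inter_filter)
        finally show ?thesis .
      qed
      also have "(\<Sum>m\<in>M. \<Sum>x\<in>A - {m}. ?e (W - {m} - {x})) +
                 (\<Sum>m\<in>M. if m \<in> A then (\<Sum>n\<in>N m. ?e (W - {m} - {n})) else 0) = (\<Sum>m\<in>M. T m)"
        by (simp add: T_def sum.distrib)
      also have "\<dots> \<le> (\<Sum>m\<in>M. ?e (W - {m}))"
      proof (rule sum_mono)
        fix m assume m: "m \<in> M"
        have mW: "m \<in> W" using m MW by blast
        have lt: "card (W - {m}) < card W" using fin mW by (meson card_Diff1_less)
        show "T m \<le> ?e (W - {m})"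
        proof (cases "m \<in> A")
          case False
          hence "A - {m} = A" by blast
          moreover have "(\<Sum>x\<in>A. ?e (W - {m} - {x})) \<le> ?e (W - {m})"
            by (rule less.hyps[OF lt fin2]) (use AW False anti irr tr in auto)
          ultimately show ?thesis using False by (simp add: T_def)
        next
          case True
          let ?A = "(A - {m}) \<union> N m"
          have disj: "(A - {m}) \<inter> N m = {}"
          proof (rule ccontr)
            assume "(A - {m}) \<inter> N m \<noteq> {}"
            then obtain n where "n \<in> A" "n \<in> N m" by blast
            then show False using Nsub[of m] anti True by blast
          qed
          have anti2: "\<forall>a\<in>?A. \<forall>b\<in>?A. (a, b) \<notin> R"
          proof (intro ballI)
            fix a b assume a: "a \<in> ?A" and b: "b \<in> ?A"
            show "(a, b) \<notin> R"
            proof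
              assume ab: "(a, b) \<in> R"
              consider "a \<in> A - {m}" "b \<in> A - {m}" | "b \<in> N m" | "a \<in> N m" "b \<in> A - {m}"
                using a b by blast
              then show False
              proof cases
                case 1 thus ?thesis using anti ab by blast
              next
                case 2
                have "a \<in> W - {m}" using a AW Nsub[of m] by blast
                thus False using 2 ab by (auto simp: N_def mins_def)
              next
                case 3
                have "(m, a) \<in> R" using 3 Nsub[of m] by blast
                hence "(m, b) \<in> R" using ab tr by (meson transD)
                thus False using anti True 3 by blast
              qed
            qed
          qed
          have "(\<Sum>x\<in>?A. ?e (W - {m} - {x})) \<le> ?e (W - {m})"
            by (rule less.hyps[OF lt fin2]) (use AW Nsub[of m] anti2 irr tr in auto)
          moreover have "(\<Sum>x\<in>?A. ?e (W - {m} - {x})) = T m"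
            unfolding T_def using True
            by (simp add: sum.union_disjoint[OF _ finN disj] finA)
          ultimately show ?thesis by simp
        qed
      qed
      also have "\<dots> = ?e W" unfolding M_def by (rule ext_rec[OF fin ne, symmetric])
      finally show ?thesis .
    qed
  qed
qed



lemma chi_ex:
  assumes fin: "finite W" and FW: "F \<subseteq> W \<times> W" and irr: "\<forall>u. (u, u) \<notin> F"
  shows "\<exists>c::'a \<Rightarrow> nat. (\<forall>v\<in>W. c v < chromatic_number W F) \<and> (\<forall>(u, w)\<in>F. c u \<noteq> c w)"
proof -
  obtain h where h: "bij_betw h W {0..<card W}" using ex_bij_betw_finite_nat[OF fin] by blast
  have "\<exists>c::'a \<Rightarrow> nat. (\<forall>v\<in>W. c v < card W) \<and> (\<forall>(u, w)\<in>F. c u \<noteq> c w)"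
  proof (intro exI conjI)
    show "\<forall>v\<in>W. h v < card W" using h by (auto simp: bij_betw_def)
    show "\<forall>(u, w)\<in>F. h u \<noteq> h w"
    proof (clarify)
      fix u w assume uw: "(u, w) \<in> F" "h u = h w"
      have "u \<in> W" "w \<in> W" using uw FW by auto
      hence "u = w" using uw h by (auto simp: bij_betw_def dest: inj_onD)
      thus False using uw irr by auto
    qed
  qed
  hence "\<exists>k c::'a \<Rightarrow> nat. (\<forall>v\<in>W. c v < k) \<and> (\<forall>(u, w)\<in>F. c u \<noteq> c w)" by blast
  thus ?thesis unfolding chromatic_number_def by (rule LeastI_ex)
qed

lemma color_ineq:
  assumes fin: "finite W" and EW: "F \<subseteq> W \<times> W" and irrE: "\<forall>u. (u, u) \<notin> F"
    and RE: "\<forall>u\<in>W. \<forall>w\<in>W. (u, w) \<in> R \<longrightarrow> (u, w) \<in> F"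
    and irr: "irrefl R" and tr: "trans R"
  shows "(\<Sum>x\<in>W. card (ext (W - {x}) R)) \<le> chromatic_number W F * card (ext W R)"
proof -
  let ?k = "chromatic_number W F"
  obtain c :: "'a \<Rightarrow> nat" where c: "\<forall>v\<in>W. c v < ?k" "\<forall>(u, w)\<in>F. c u \<noteq> c w"
    using chi_ex[OF fin EW irrE] by blast
  define C where "C = (\<lambda>i. {x\<in>W. c x = i})"
  have WU: "W = (\<Union>i\<in>{..<?k}. C i)" using c(1) by (auto simp: C_def)
  have "(\<Sum>x\<in>W. card (ext (W - {x}) R)) = (\<Sum>i\<in>{..<?k}. \<Sum>x\<in>C i. card (ext (W - {x}) R))"
  proof -
    have "(\<Sum>x\<in>(\<Union>i\<in>{..<?k}. C i). card (ext (W - {x}) R)) = (\<Sum>i\<in>{..<?k}. \<Sum>x\<in>C i. card (ext (W - {x}) R))"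
      by (rule sum.UNION_disjoint) (use fin in \<open>auto simp: C_def\<close>)
    thus ?thesis by (simp only: WU[symmetric])
  qed
  also have "\<dots> \<le> (\<Sum>i\<in>{..<?k}. card (ext W R))"
  proof (rule sum_mono)
    fix i
    show "(\<Sum>x\<in>C i. card (ext (W - {x}) R)) \<le> card (ext W R)"
    proof (rule antichain_ineq[OF fin _ _ irr tr])
      show "C i \<subseteq> W" by (auto simp: C_def)
      show "\<forall>a\<in>C i. \<forall>b\<in>C i. (a, b) \<notin> R"
      proof (intro ballI notI)
        fix a b assume ab: "a \<in> C i" "b \<in> C i" "(a, b) \<in> R"
        hence "(a, b) \<in> F" using RE by (auto simp: C_def)
        hence "c a \<noteq> c b" using c(2) by auto
        thus False using ab by (auto simp: C_def)
      qed
    qed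
  qed
  also have "\<dots> = ?k * card (ext W R)" by simp
  finally show ?thesis .
qed


definition gsum :: "('a set \<Rightarrow> real) \<Rightarrow> 'a set \<Rightarrow> real" where
  "gsum \<phi> W = (\<Sum>xs\<in>permutations_of_set W. \<Prod>k<length xs. \<phi> (W - set (take k xs)))"

lemma gsum_empty: "gsum \<phi> {} = 1"
  by (simp add: gsum_def)

lemma gsum_rec:
  assumes fin: "finite W" and ne: "W \<noteq> {}"
  shows "gsum \<phi> W = \<phi> W * (\<Sum>x\<in>W. gsum \<phi> (W - {x}))"
proof -
  let ?F = "\<lambda>W xs. \<Prod>k<length xs. \<phi> (W - set (take k xs))"
  have "gsum \<phi> W = (\<Sum>xs\<in>(\<Union>x\<in>W. (#) x ` permutations_of_set (W - {x})). ?F W xs)"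
    unfolding gsum_def by (subst permutations_of_set_nonempty[OF ne]) (rule refl)
  also have "\<dots> = (\<Sum>x\<in>W. \<Sum>xs\<in>(#) x ` permutations_of_set (W - {x}). ?F W xs)"
    by (rule sum.UNION_disjoint) (use fin in auto)
  also have "\<dots> = (\<Sum>x\<in>W. \<Sum>ys\<in>permutations_of_set (W - {x}). ?F W (x # ys))"
    by (rule sum.cong[OF refl], rule sum.reindex_cong[where l="(#) _"]) (auto simp: inj_on_def)
  also have "\<dots> = (\<Sum>x\<in>W. \<phi> W * gsum \<phi> (W - {x}))"
  proof (rule sum.cong[OF refl])
    fix x
    have "?F W (x # ys) = \<phi> W * ?F (W - {x}) ys" for ys
    proof -
      have "?F W (x # ys) = \<phi> (W - set (take 0 (x # ys))) *
             (\<Prod>k<length ys. \<phi> (W - set (take (Suc k) (x # ys))))"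
        by (simp only: length_Cons prod.lessThan_Suc_shift)
      also have "\<dots> = \<phi> W * ?F (W - {x}) ys"
      proof -
        have "W - set (take (Suc k) (x # ys)) = W - {x} - set (take k ys)" for k by auto
        thus ?thesis by simp
      qed
      finally show ?thesis .
    qed
    thus "(\<Sum>ys\<in>permutations_of_set (W - {x}). ?F W (x # ys)) = \<phi> W * gsum \<phi> (W - {x})"
      by (simp add: gsum_def sum_distrib_left)
  qed
  also have "\<dots> = \<phi> W * (\<Sum>x\<in>W. gsum \<phi> (W - {x}))" by (simp add: sum_distrib_left)
  finally show ?thesis .
qed


lemma gsum_le_ext:
  assumes fin: "finite V" and irrE: "\<forall>u. (u, u) \<notin> E"
    and RE: "\<forall>u\<in>V. \<forall>w\<in>V. (u, w) \<in> R \<longrightarrow> (u, w) \<in> E"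
    and irr: "irrefl R" and tr: "trans R"
  shows "W \<subseteq> V \<Longrightarrow> gsum (\<lambda>U. 1 / real (chromatic_number U (E \<inter> U \<times> U))) W \<le> real (card (ext W R))"
proof (induction "card W" arbitrary: W rule: less_induct)
  case less
  let ?\<phi> = "\<lambda>U. 1 / real (chromatic_number U (E \<inter> U \<times> U))"
  have finW: "finite W" using less.prems fin finite_subset by blast
  show ?case
  proof (cases "W = {}")
    case True thus ?thesis by (simp add: gsum_empty ext_empty)
  next
    case False
    let ?k = "chromatic_number W (E \<inter> W \<times> W)"
    have IH: "gsum ?\<phi> (W - {x}) \<le> real (card (ext (W - {x}) R))" if "x \<in> W" for x
    proof -
      have "card (W - {x}) < card W" using finW that by (rule card_Diff1_less)
      moreover have "W - {x} \<subseteq> V" using less.prems by blast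
      ultimately show ?thesis by (rule less.hyps)
    qed
    have ci: "(\<Sum>x\<in>W. card (ext (W - {x}) R)) \<le> ?k * card (ext W R)"
    proof (rule color_ineq[OF finW _ _ _ irr tr])
      show "E \<inter> W \<times> W \<subseteq> W \<times> W" by blast
      show "\<forall>u. (u, u) \<notin> E \<inter> W \<times> W" using irrE by blast
      show "\<forall>u\<in>W. \<forall>w\<in>W. (u, w) \<in> R \<longrightarrow> (u, w) \<in> E \<inter> W \<times> W" using RE less.prems by blast
    qed
    have "gsum ?\<phi> W = ?\<phi> W * (\<Sum>x\<in>W. gsum ?\<phi> (W - {x}))" by (rule gsum_rec[OF finW False])
    also have "\<dots> \<le> ?\<phi> W * (\<Sum>x\<in>W. real (card (ext (W - {x}) R)))"
      by (rule mult_left_mono[OF sum_mono]) (use IH in auto)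
    also have "\<dots> \<le> real (card (ext W R))"
    proof (cases "?k = 0")
      case True thus ?thesis by simp
    next
      case False
      have "(\<Sum>x\<in>W. real (card (ext (W - {x}) R))) \<le> real ?k * real (card (ext W R))"
      proof -
        have "real (\<Sum>x\<in>W. card (ext (W - {x}) R)) \<le> real (?k * card (ext W R))"
          using ci by (simp only: of_nat_le_iff)
        thus ?thesis by (simp only: of_nat_sum of_nat_mult)
      qed
      thus ?thesis using False by (simp add: field_simps)
    qed
    finally show ?thesis .
  qed
qed



lemma perm_list_bij:
  assumes inj: "inj_on v {1..n}" and V: "V = v ` {1..n}"
  shows "bij_betw (\<lambda>\<sigma>. map (\<lambda>i. v (\<sigma> i)) [1..<Suc n]) {\<sigma>. \<sigma> permutes {1..n}} (permutations_of_set V)"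
proof (rule inj_card_bij)
  show "inj_on (\<lambda>\<sigma>. map (\<lambda>i. v (\<sigma> i)) [1..<Suc n]) {\<sigma>. \<sigma> permutes {1..n}}"
  proof (rule inj_onI)
    fix \<sigma> \<tau> assume s: "\<sigma> \<in> {\<sigma>. \<sigma> permutes {1..n}}" and t: "\<tau> \<in> {\<sigma>. \<sigma> permutes {1..n}}"
      and eq: "map (\<lambda>i. v (\<sigma> i)) [1..<Suc n] = map (\<lambda>i. v (\<tau> i)) [1..<Suc n]"
    show "\<sigma> = \<tau>"
    proof
      fix i show "\<sigma> i = \<tau> i"
      proof (cases "i \<in> {1..n}")
        case True
        have "\<forall>i\<in>set [1..<Suc n]. v (\<sigma> i) = v (\<tau> i)" using eq by (simp only: map_eq_conv)
        hence "v (\<sigma> i) = v (\<tau> i)" using True by (simp del: upt_Suc)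
        moreover have "\<sigma> i \<in> {1..n}" "\<tau> i \<in> {1..n}" using s t True by (simp_all only: mem_Collect_eq permutes_in_image)
        ultimately show ?thesis using inj by (meson inj_onD)
      next
        case False thus ?thesis using s t by (simp add: permutes_not_in)
      qed
    qed
  qed
  show "(\<lambda>\<sigma>. map (\<lambda>i. v (\<sigma> i)) [1..<Suc n]) ` {\<sigma>. \<sigma> permutes {1..n}} \<subseteq> permutations_of_set V"
  proof clarify
    fix \<sigma> assume s: "\<sigma> permutes {1..n}"
    have "set (map (\<lambda>i. v (\<sigma> i)) [1..<Suc n]) = v ` \<sigma> ` {1..n}"
      by (auto simp: atLeastLessThanSuc_atLeastAtMost)
    also have "\<dots> = V" using s V by (simp add: permutes_image)
    finally have 1: "set (map (\<lambda>i. v (\<sigma> i)) [1..<Suc n]) = V" .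
    have "inj_on (\<lambda>i. v (\<sigma> i)) {1..n}"
    proof (rule inj_onI)
      fix i j assume ij: "i \<in> {1..n}" "j \<in> {1..n}" "v (\<sigma> i) = v (\<sigma> j)"
      have "\<sigma> i \<in> {1..n}" "\<sigma> j \<in> {1..n}" using s ij(1,2) by (simp_all only: permutes_in_image)
      hence "\<sigma> i = \<sigma> j" using inj ij by (meson inj_onD)
      thus "i = j" using s by (metis permutes_inj inj_eq)
    qed
    hence "distinct (map (\<lambda>i. v (\<sigma> i)) [1..<Suc n])"
      by (simp add: distinct_map atLeastLessThanSuc_atLeastAtMost del: upt_Suc)
    thus "map (\<lambda>i. v (\<sigma> i)) [1..<Suc n] \<in> permutations_of_set V" using 1 by blast
  qed
  have cV: "card V = n" using inj V by (simp add: card_image)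
  have fV: "finite V" using V by simp
  show "card {\<sigma>. \<sigma> permutes {1..n}} = card (permutations_of_set V)"
    using cV fV by (simp add: card_permutations)
  show "finite (permutations_of_set V)" by simp
qed

lemma take_map_upt:
  assumes "k \<le> n"
  shows "set (take k (map (\<lambda>i. v (\<sigma> i)) [1..<Suc n])) = v ` \<sigma> ` {1..k}"
proof -
  have "take k [1..<Suc n] = [1..<1 + k]" using assms by (simp add: take_upt del: upt_Suc)
  thus ?thesis by (simp add: take_map atLeastLessThanSuc_atLeastAtMost image_image del: upt_Suc)
qed

theorem theorem4p3:
  fixes V :: "'a set" and E :: "('a \<times> 'a) set" and n :: nat and v :: "nat \<Rightarrow> 'a"
  assumes "comparability_graph V E"
    and "inj_on v {1..n}" and "V = v ` {1..n}"
  shows "real (eps V E) \<ge>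
    (\<Sum>\<sigma> \<in> {\<sigma>. \<sigma> permutes {1..n}}.
       \<Prod>k<n. 1 / real (chromatic_number
          (V - v ` \<sigma> ` {1..k}) (del_vertices_E V E (v ` \<sigma> ` {1..k}))))"
proof -
  note cg = assms(1)[unfolded comparability_graph_def simple_graph_def]
  have finV: "finite V" and EV: "E \<subseteq> V \<times> V" and irrE: "irrefl E" using cg by auto
  obtain R where R: "R \<subseteq> V \<times> V" "irrefl R" "trans R"
    and comp: "\<forall>u\<in>V. \<forall>w\<in>V. u \<noteq> w \<longrightarrow> ((u, w) \<in> E \<longleftrightarrow> (u, w) \<in> R \<or> (w, u) \<in> R)"
    using cg by blast
  have RE: "\<forall>u\<in>V. \<forall>w\<in>V. (u, w) \<in> R \<longrightarrow> (u, w) \<in> E"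
  proof (intro ballI impI)
    fix u w assume "u \<in> V" "w \<in> V" "(u, w) \<in> R"
    moreover hence "u \<noteq> w" using R(2) by (auto simp: irrefl_def)
    ultimately show "(u, w) \<in> E" using comp by blast
  qed
  have irrE': "\<forall>u. (u, u) \<notin> E" using irrE by (simp add: irrefl_def)
  let ?\<phi> = "\<lambda>U. 1 / real (chromatic_number U (E \<inter> U \<times> U))"
  have g: "gsum ?\<phi> V \<le> real (card (ext V R))"
    by (rule gsum_le_ext[OF finV irrE' RE R(2) R(3)]) simp
  have tr: "R\<^sup>+ = R" using R(3) by (rule trancl_id)
  have le: "linear_extensions V R = ext V R"
    by (simp add: linear_extensions_def ext_def tr)
  have ao: "acyclic_orientation E R"
    unfolding acyclic_orientation_def
  proof (intro conjI)
    show "R \<subseteq> E" using R(1) RE by auto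
    show "\<forall>(u, w)\<in>E. ((u, w) \<in> R) = ((w, u) \<notin> R)"
    proof clarify
      fix u w assume uw: "(u, w) \<in> E"
      hence "u \<in> V" "w \<in> V" "u \<noteq> w" using EV irrE by (auto simp: irrefl_def)
      hence "(u, w) \<in> R \<or> (w, u) \<in> R" using comp uw by blast
      moreover have "\<not> ((u, w) \<in> R \<and> (w, u) \<in> R)"
        using R(2) R(3) by (meson irrefl_def transD)
      ultimately show "((u, w) \<in> R) = ((w, u) \<notin> R)" by blast
    qed
    show "acyclic R" using R(2) by (simp add: acyclic_def tr irrefl_def)
  qed
  have finD: "finite {D. acyclic_orientation E D}"
  proof (rule finite_subset[of _ "Pow E"])
    show "{D. acyclic_orientation E D} \<subseteq> Pow E" by (auto simp: acyclic_orientation_def)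
    show "finite (Pow E)" using finV EV by (meson finite_Pow_iff finite_SigmaI finite_subset)
  qed
  have "num_linear_extensions V R \<le> eps V E"
    unfolding eps_def using finD ao by (intro Max_ge) auto
  hence ge: "real (card (ext V R)) \<le> real (eps V E)"
    by (simp add: num_linear_extensions_def le)
  have "(\<Sum>\<sigma> \<in> {\<sigma>. \<sigma> permutes {1..n}}.
       \<Prod>k<n. 1 / real (chromatic_number
          (V - v ` \<sigma> ` {1..k}) (del_vertices_E V E (v ` \<sigma> ` {1..k})))) =
      (\<Sum>\<sigma> \<in> {\<sigma>. \<sigma> permutes {1..n}}. (\<lambda>xs. \<Prod>k<length xs. ?\<phi> (V - set (take k xs)))
          (map (\<lambda>i. v (\<sigma> i)) [1..<Suc n]))"
  proof (rule sum.cong[OF refl])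
    fix \<sigma>
    show "(\<Prod>k<n. 1 / real (chromatic_number
          (V - v ` \<sigma> ` {1..k}) (del_vertices_E V E (v ` \<sigma> ` {1..k})))) =
       (\<lambda>xs. \<Prod>k<length xs. ?\<phi> (V - set (take k xs))) (map (\<lambda>i. v (\<sigma> i)) [1..<Suc n])"
    proof -
      have len: "length (map (\<lambda>i. v (\<sigma> i)) [1..<Suc n]) = n" by simp
      show ?thesis unfolding len
      proof (rule prod.cong[OF refl])
        fix k assume "k \<in> {..<n}"
        hence "set (take k (map (\<lambda>i. v (\<sigma> i)) [1..<Suc n])) = v ` \<sigma> ` {1..k}"
          by (intro take_map_upt) simp
        thus "1 / real (chromatic_number (V - v ` \<sigma> ` {1..k}) (del_vertices_E V E (v ` \<sigma> ` {1..k}))) =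
          ?\<phi> (V - set (take k (map (\<lambda>i. v (\<sigma> i)) [1..<Suc n])))"
          by (simp only: del_vertices_E_def)
      qed
    qed
  qed
  also have "\<dots> = gsum ?\<phi> V"
    unfolding gsum_def by (rule sum.reindex_bij_betw[OF perm_list_bij[OF assms(2,3)]])
  finally show ?thesis using g ge by linarith
qed

end
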